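(* Let $H(\mathbb{C})$ be the space of entire functions with the topology of uniform convergence on compact subsets, and for $a\in\mathbb{C}\setminus\{0\}$ let $T:H(\mathbb{C})\to H(\mathbb{C})$ be the translation operator $T(f)(z)=f(z+a)$. Then $T$ is not supermixing.
   Context: $H(\mathbb{C})$ is metrizable (a Fréchet space). A continuous map $T:X\to X$ is supermixing if for each nonempty open subset $U$ of $X$, $X=\overline{\bigcup_{i=0}^\infty\bigcap_{n=i}^\infty T^n(U)}$. *)

theory Defs
  imports "HOL-Complex_Analysis.Complex_Analysis"
begin

definition entire_fns :: "(complex \<Rightarrow> complex) set" where
  "entire_fns = {f. f holomorphic_on UNIV}"

text \<open>Topology of uniform convergence on compact subsets: a set U of entire functions
  is open iff every f in U has a basic neighbourhood
  {g entire. sup over K of |g - f| < e} inside U, for some compact K and e > 0.\<close>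
definition H_open :: "(complex \<Rightarrow> complex) set \<Rightarrow> bool" where
  "H_open U \<longleftrightarrow> U \<subseteq> entire_fns \<and>
     (\<forall>f\<in>U. \<exists>K e. compact K \<and> e > 0 \<and>
        {g \<in> entire_fns. \<forall>z\<in>K. cmod (g z - f z) < e} \<subseteq> U)"

definition H_top :: "(complex \<Rightarrow> complex) topology" where
  "H_top = topology H_open"

lemma istopology_H_open: "istopology H_open"
  unfolding istopology_def
proof (intro conjI allI impI)
  fix S T assume S: "H_open S" and T: "H_open T"
  show "H_open (S \<inter> T)"
    unfolding H_open_def
  proof (intro conjI ballI)
    show "S \<inter> T \<subseteq> entire_fns" using S unfolding H_open_def by blast
    fix f assume f: "f \<in> S \<inter> T"
    obtain K1 e1 where 1: "compact K1" "e1 > 0" "{g \<in> entire_fns. \<forall>z\<in>K1. cmod (g z - f z) < e1} \<subseteq> S"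
      using S f unfolding H_open_def by blast
    obtain K2 e2 where 2: "compact K2" "e2 > 0" "{g \<in> entire_fns. \<forall>z\<in>K2. cmod (g z - f z) < e2} \<subseteq> T"
      using T f unfolding H_open_def by blast
    show "\<exists>K e. compact K \<and> e > 0 \<and> {g \<in> entire_fns. \<forall>z\<in>K. cmod (g z - f z) < e} \<subseteq> S \<inter> T"
      apply (rule exI[of _ "K1 \<union> K2"], rule exI[of _ "min e1 e2"])
      using 1 2 by fastforce
  qed
next
  fix K :: "(complex \<Rightarrow> complex) set set" assume "\<forall>S\<in>K. H_open S"
  then show "H_open (\<Union>K)" unfolding H_open_def by (meson Union_iff Union_least subset_iff)
qed

lemma topspace_H_top: "topspace H_top = entire_fns"
proof -
  have "H_open entire_fns" unfolding H_open_def
    by (auto intro!: exI[of _ "{}"] exI[of _ "1::real"])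
  then show ?thesis unfolding H_top_def topspace_def
    using istopology_H_open H_open_def by (auto simp: topology_inverse')
qed

definition translation :: "complex \<Rightarrow> (complex \<Rightarrow> complex) \<Rightarrow> (complex \<Rightarrow> complex)" where
  "translation a f = (\<lambda>z. f (z + a))"

definition supermixing :: "'a topology \<Rightarrow> ('a \<Rightarrow> 'a) \<Rightarrow> bool" where
  "supermixing X T \<longleftrightarrow>
     (\<forall>U. openin X U \<and> U \<noteq> {} \<longrightarrow>
        X closure_of (\<Union>i. \<Inter>n\<in>{i..}. (T ^^ n) ` U) = topspace X)"

end

theory Submission
  imports Defs
begin

lemma transl_pow: "(translation a ^^ n) f = (\<lambda>z. f (z + of_nat n * a))"
  by (induction n) (auto simp: translation_def algebra_simps)

theorem mainTheorem7:
  fixes a :: complex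
  assumes "a \<noteq> 0"
  shows "\<not> supermixing H_top (translation a)"
proof
  assume sm: "supermixing H_top (translation a)"
  define U where "U = {g \<in> entire_fns. cmod (g 0) < 1 \<and> cmod (g a - 3) < 1}"
  have HU: "H_open U"
    unfolding H_open_def
  proof (intro conjI ballI)
    show "U \<subseteq> entire_fns" unfolding U_def by auto
    fix f assume f: "f \<in> U"
    define e where "e = min (1 - cmod (f 0)) (1 - cmod (f a - 3))"
    have e: "e > 0" using f unfolding U_def e_def by auto
    show "\<exists>K e. compact K \<and> e > 0 \<and> {g \<in> entire_fns. \<forall>z\<in>K. cmod (g z - f z) < e} \<subseteq> U"
    proof (intro exI conjI)
      show "compact {0, a}" by simp
      show "e > 0" by (rule e)
      show "{g \<in> entire_fns. \<forall>z\<in>{0,a}. cmod (g z - f z) < e} \<subseteq> U"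
      proof
        fix g assume g: "g \<in> {g \<in> entire_fns. \<forall>z\<in>{0,a}. cmod (g z - f z) < e}"
        have "cmod (g 0) \<le> cmod (g 0 - f 0) + cmod (f 0)" by (metis norm_triangle_sub add.commute)
        moreover have "cmod (g a - 3) \<le> cmod (g a - f a) + cmod (f a - 3)"
          by (metis diff_add_cancel norm_triangle_ineq add_diff_eq)
        ultimately show "g \<in> U" using g unfolding U_def e_def by auto
      qed
    qed
  qed
  have op: "openin H_top U"
    unfolding H_top_def using HU istopology_H_open by (simp add: topology_inverse')
  have ne: "U \<noteq> {}"
  proof -
    have "(\<lambda>z. 3 * z / a) \<in> U" unfolding U_def entire_fns_def using assms
      by (auto intro!: holomorphic_intros)
    thus ?thesis by auto
  qed
  have empty: "(\<Inter>n\<in>{i..}. (translation a ^^ n) ` U) = {}" for i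
  proof (rule ccontr)
    assume "(\<Inter>n\<in>{i..}. (translation a ^^ n) ` U) \<noteq> {}"
    then obtain h where h: "h \<in> (translation a ^^ i) ` U" "h \<in> (translation a ^^ Suc i) ` U"
      by (metis (no_types, lifting) INT_E atLeast_iff ex_in_conv le_Suc_eq order_refl)
    then obtain f1 f2 where f: "f1 \<in> U" "f2 \<in> U"
      "h = (\<lambda>z. f1 (z + of_nat i * a))" "h = (\<lambda>z. f2 (z + of_nat (Suc i) * a))"
    proof -
      from h(1) obtain f1 where "f1 \<in> U" "h = (translation a ^^ i) f1" by blast
      moreover from h(2) obtain f2 where "f2 \<in> U" "h = (translation a ^^ Suc i) f2" by blast
      ultimately show ?thesis using that by (simp only: transl_pow)
    qed
    have "f1 0 = f2 a"
      using fun_cong[OF trans[OF sym[OF f(3)] f(4)], of "- of_nat i * a"]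
      by (simp add: algebra_simps)
    moreover have "cmod (f1 0) < 1" "cmod (f2 a - 3) < 1" using f unfolding U_def by auto
    ultimately have "cmod (3::complex) < 2"
      by (metis (no_types, opaque_lifting) add.commute diff_add_cancel norm_triangle_lt
          norm_minus_commute add_strict_mono one_add_one)
    thus False by simp
  qed
  have "H_top closure_of {} = topspace H_top"
  proof -
    have "H_top closure_of (\<Union>i. \<Inter>n\<in>{i..}. (translation a ^^ n) ` U) = topspace H_top"
      using sm op ne unfolding supermixing_def by blast
    thus ?thesis by (simp only: empty) simp
  qed
  moreover have "(\<lambda>z. 0) \<in> topspace H_top" by (simp add: topspace_H_top entire_fns_def)
  ultimately show False by simp
qed

end
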